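(* Let $d$ and $k$ be positive integers and let $p$ be the smallest positive integer such that $k<\kappa_p$. If $d$ is a proper divisor of $p$ (that is, $d$ divides $p$ and $d\ne p$) and either (i) $k-\kappa_{p-1}=p/d$, or (ii) $\kappa_p-k=p/d$, then $\delta_z(d,k)\neq\lfloor\lambda(d,k)\rfloor$.
   Context: A point of $\mathbb{Z}^d$ is primitive if its coordinates are relatively prime; $\mathbb{P}^d_\circ$ denotes the set of primitive points of $\mathbb{Z}^d$ whose first non-zero coordinate is positive. For a finite $\mathcal{X}\subset\mathbb{R}^d$, $\kappa(\mathcal{X})=\max_{1\le i\le d}\sum_{x\in\mathcal{X}}|x_i|$, and $\delta_z(d,k)=\max\{|\mathcal{X}|:\mathcal{X}\subset\mathbb{P}^d_\circ,\ \kappa(\mathcal{X})\le k\}$. $B(d,p)=\{x\in\mathbb{R}^d:\|x\|_1\le p\}$; for integers $p\ge0$, $N_p=|B(d,p)\cap\mathbb{P}^d_\circ|$ and $\kappa_p=\kappa(B(d,p)\cap\mathbb{P}^d_\circ)$ (so $N_0=\kappa_0=0$). With $p$ as in the claim, $\lambda(d,k)=N_{p-1}+\frac{d(k-\kappa_{p-1})}{p}$. *)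

theory Defs
  imports Complex_Main
begin

text \<open>Points of Z^d are represented as functions nat => int vanishing outside {0..<d}.\<close>

definition primitive :: "nat \<Rightarrow> (nat \<Rightarrow> int) \<Rightarrow> bool" where
  "primitive d x \<longleftrightarrow> (\<forall>i\<ge>d. x i = 0) \<and> Gcd (x ` {..<d}) = 1"

definition Pcirc :: "nat \<Rightarrow> (nat \<Rightarrow> int) set" where
  "Pcirc d = {x. primitive d x \<and> (\<exists>j<d. 0 < x j \<and> (\<forall>i<j. x i = 0))}"

definition kappa :: "nat \<Rightarrow> (nat \<Rightarrow> int) set \<Rightarrow> int" where
  "kappa d X = Max {(\<Sum>x\<in>X. \<bar>x i\<bar>) | i. i < d}"

definition delta_z :: "nat \<Rightarrow> nat \<Rightarrow> nat" where
  "delta_z d k = Max {card X | X. finite X \<and> X \<subseteq> Pcirc d \<and> kappa d X \<le> int k}"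

definition l1norm :: "nat \<Rightarrow> (nat \<Rightarrow> int) \<Rightarrow> int" where
  "l1norm d x = (\<Sum>i<d. \<bar>x i\<bar>)"

definition ballP :: "nat \<Rightarrow> nat \<Rightarrow> (nat \<Rightarrow> int) set" where
  "ballP d p = {x \<in> Pcirc d. l1norm d x \<le> int p}"

definition Nb :: "nat \<Rightarrow> nat \<Rightarrow> nat" where
  "Nb d p = card (ballP d p)"

definition kappab :: "nat \<Rightarrow> nat \<Rightarrow> int" where
  "kappab d p = kappa d (ballP d p)"

definition lambda_dk :: "nat \<Rightarrow> nat \<Rightarrow> nat \<Rightarrow> real" where
  "lambda_dk d k p = real (Nb d (p - 1)) + real d * (real k - real_of_int (kappab d (p - 1))) / real p"

end

theory Submission
  imports Defs
begin


definition cs :: "(nat \<Rightarrow> int) set \<Rightarrow> nat \<Rightarrow> int" where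
  "cs X i = (\<Sum>x\<in>X. \<bar>x i\<bar>)"

lemma abs_le_l1: "t < d \<Longrightarrow> \<bar>x t\<bar> \<le> l1norm d x"
  unfolding l1norm_def by (rule member_le_sum) auto

lemma finite_ballP: "finite (ballP d q)"
proof -
  let ?S = "{xs :: int list. set xs \<subseteq> {-int q..int q} \<and> length xs = d}"
  have fin: "finite ?S" by (rule finite_lists_length_eq) simp
  have inj: "inj_on (\<lambda>x. map x [0..<d]) (ballP d q)"
  proof (rule inj_onI)
    fix x y assume x: "x \<in> ballP d q" and y: "y \<in> ballP d q" and eq: "map x [0..<d] = map y [0..<d]"
    show "x = y"
    proof
      fix t show "x t = y t"
      proof (cases "t < d")
        case True then show ?thesis using eq by (simp add: map_eq_conv)
      next
        case False then show ?thesis using x y by (auto simp: ballP_def Pcirc_def primitive_def)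
      qed
    qed
  qed
  have sub: "(\<lambda>x. map x [0..<d]) ` ballP d q \<subseteq> ?S"
  proof
    fix xs assume "xs \<in> (\<lambda>x. map x [0..<d]) ` ballP d q"
    then obtain x where x: "x \<in> ballP d q" and xs: "xs = map x [0..<d]" by auto
    have "\<And>t. t < d \<Longrightarrow> \<bar>x t\<bar> \<le> int q"
      using abs_le_l1[of _ d x] x unfolding ballP_def by force
    then have "\<And>t. t < d \<Longrightarrow> x t \<in> {-int q..int q}"
    proof -
      fix t assume "t < d" "\<And>t. t < d \<Longrightarrow> \<bar>x t\<bar> \<le> int q"
      then have "\<bar>x t\<bar> \<le> int q" by blast
      then show "x t \<in> {-int q..int q}" by (auto simp: abs_le_iff)
    qed
    then show "xs \<in> ?S" using xs by auto
  qed
  show ?thesis using finite_imageD[OF finite_subset[OF sub fin] inj] .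
qed

lemma prim_nonzero: "0 < d \<Longrightarrow> primitive d x \<Longrightarrow> \<exists>t<d. x t \<noteq> 0"
proof (rule ccontr)
  assume d: "0 < d" and p: "primitive d x" and n: "\<not> (\<exists>t<d. x t \<noteq> 0)"
  then have "x ` {..<d} = {0}" by auto
  then show False using p by (simp add: primitive_def)
qed

definition tw :: "nat \<Rightarrow> nat \<Rightarrow> nat \<Rightarrow> nat" where
  "tw i j t = (if t = i then j else if t = j then i else t)"

definition nrm :: "nat \<Rightarrow> (nat \<Rightarrow> int) \<Rightarrow> (nat \<Rightarrow> int)" where
  "nrm d y = (if (\<exists>j<d. 0 < y j \<and> (\<forall>i<j. y i = 0)) then y else (\<lambda>t. - y t))"

definition fsw :: "nat \<Rightarrow> nat \<Rightarrow> nat \<Rightarrow> (nat \<Rightarrow> int) \<Rightarrow> (nat \<Rightarrow> int)" where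
  "fsw d i j x = nrm d (\<lambda>t. x (tw i j t))"

lemma tw_tw[simp]: "tw i j (tw i j t) = t" by (auto simp: tw_def)
lemma tw_ge: "i < d \<Longrightarrow> j < d \<Longrightarrow> d \<le> t \<Longrightarrow> tw i j t = t" by (auto simp: tw_def)
lemma tw_lt: "i < d \<Longrightarrow> j < d \<Longrightarrow> t < d \<Longrightarrow> tw i j t < d" by (auto simp: tw_def)
lemma tw_img: "i < d \<Longrightarrow> j < d \<Longrightarrow> tw i j ` {..<d} = {..<d}"
  apply (auto simp: tw_lt)
  by (metis lessThan_iff rev_image_eqI tw_lt tw_tw)

lemma abs_nrm[simp]: "\<bar>nrm d y t\<bar> = \<bar>y t\<bar>" by (auto simp: nrm_def)

lemma Gcd_neg: "Gcd ((\<lambda>t. - y t) ` A) = Gcd (y ` A :: int set)"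
proof (rule zdvd_antisym_nonneg)
  show "Gcd ((\<lambda>t. - y t) ` A) dvd Gcd (y ` A)"
  proof (rule Gcd_greatest)
    fix b assume "b \<in> y ` A"
    then obtain t where t: "t \<in> A" "b = y t" by auto
    have "Gcd ((\<lambda>t. - y t) ` A) dvd - y t" by (rule Gcd_dvd) (use t in auto)
    then show "Gcd ((\<lambda>t. - y t) ` A) dvd b" using t by simp
  qed
  show "Gcd (y ` A) dvd Gcd ((\<lambda>t. - y t) ` A)"
  proof (rule Gcd_greatest)
    fix b assume "b \<in> (\<lambda>t. - y t) ` A"
    then obtain t where t: "t \<in> A" "b = - y t" by auto
    have "Gcd (y ` A) dvd y t" by (rule Gcd_dvd) (use t in auto)
    then show "Gcd (y ` A) dvd b" using t by simp
  qed
qed auto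

lemma primitive_nrm: "primitive d y \<Longrightarrow> primitive d (nrm d y)"
  unfolding primitive_def nrm_def using Gcd_neg[of y "{..<d}"] by auto

lemma nrm_in_Pcirc:
  assumes d: "0 < d" and p: "primitive d y" shows "nrm d y \<in> Pcirc d"
proof -
  obtain t where t: "t < d" "y t \<noteq> 0" using prim_nonzero[OF d p] by auto
  define j0 where "j0 = (LEAST t. y t \<noteq> 0)"
  have j0: "y j0 \<noteq> 0" unfolding j0_def by (rule LeastI[of "\<lambda>t. y t \<noteq> 0" t]) (rule t(2))
  have "j0 \<le> t" unfolding j0_def by (rule Least_le[of "\<lambda>t. y t \<noteq> 0" t]) (rule t(2))
  then have j0d: "j0 < d" using t(1) by linarith
  have below: "\<forall>i<j0. y i = 0"
  proof (intro allI impI)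
    fix i assume "i < j0"
    then have "\<not> (y i \<noteq> 0)" unfolding j0_def by (rule not_less_Least)
    then show "y i = 0" by simp
  qed
  show ?thesis
  proof (cases "\<exists>j<d. 0 < y j \<and> (\<forall>i<j. y i = 0)")
    case True
    then have "nrm d y = y" unfolding nrm_def by (simp only: if_True)
    then show ?thesis using p True by (simp add: Pcirc_def)
  next
    case False
    then have e: "nrm d y = (\<lambda>t. - y t)" unfolding nrm_def by (simp only: if_False)
    have "\<not> 0 < y j0" using False j0d below by blast
    then have "0 < - y j0" using j0 by linarith
    moreover have "\<forall>i<j0. - y i = 0" using below by simp
    moreover have "primitive d (\<lambda>t. - y t)" using primitive_nrm[OF p] e by simp
    ultimately show ?thesis using j0d e unfolding Pcirc_def by auto
  qed
qed

lemma nrm_id: "x \<in> Pcirc d \<Longrightarrow> nrm d x = x"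
  by (auto simp: nrm_def Pcirc_def)

lemma nrm_neg: assumes "x \<in> Pcirc d" shows "nrm d (\<lambda>t. - x t) = x"
proof -
  obtain j' where j': "j' < d" "0 < x j'" "\<forall>i<j'. x i = 0" using assms by (auto simp: Pcirc_def)
  have "\<not> (\<exists>j<d. 0 < - x j \<and> (\<forall>i<j. - x i = 0))"
  proof
    assume "\<exists>j<d. 0 < - x j \<and> (\<forall>i<j. - x i = 0)"
    then obtain j where j: "0 < - x j" "\<forall>i<j. - x i = 0" by auto
    show False
    proof (cases j j' rule: linorder_cases)
      case less then show ?thesis using j j' by auto
    next
      case equal then show ?thesis using j j' by auto
    next
      case greater then show ?thesis using j j' by fastforce
    qed
  qed
  then have "nrm d (\<lambda>t. - x t) = (\<lambda>t. - (- x t))" unfolding nrm_def by (simp only: if_False)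
  then show ?thesis by simp
qed

lemma prim_tw:
  assumes "i < d" "j < d" "primitive d x" shows "primitive d (\<lambda>t. x (tw i j t))"
proof -
  have "(\<lambda>t. x (tw i j t)) ` {..<d} = x ` (tw i j ` {..<d})" by auto
  also have "\<dots> = x ` {..<d}" using tw_img[OF assms(1,2)] by simp
  finally show ?thesis using assms tw_ge[OF assms(1,2)] unfolding primitive_def by auto
qed

lemma l1_nrm: "l1norm d (nrm d y) = l1norm d y" by (simp add: l1norm_def)

lemma l1_tw: assumes "i < d" "j < d" shows "l1norm d (\<lambda>t. x (tw i j t)) = l1norm d x"
  unfolding l1norm_def
  by (rule sum.reindex_bij_witness[where i="tw i j" and j="tw i j"]) (auto simp: tw_lt assms)

lemma fsw_in:
  assumes "0 < d" "i < d" "j < d" "x \<in> ballP d q" shows "fsw d i j x \<in> ballP d q"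
  using assms nrm_in_Pcirc[OF assms(1) prim_tw[OF assms(2,3)]] l1_nrm l1_tw[OF assms(2,3)]
  unfolding fsw_def ballP_def Pcirc_def by auto

lemma fsw_invol:
  assumes "x \<in> Pcirc d" shows "fsw d i j (fsw d i j x) = x"
proof (cases "\<exists>j'<d. 0 < x (tw i j j') \<and> (\<forall>i'<j'. x (tw i j i') = 0)")
  case True
  then have "fsw d i j x = (\<lambda>t. x (tw i j t))" unfolding fsw_def nrm_def by (simp only: if_True)
  then show ?thesis using nrm_id[OF assms] by (simp add: fsw_def)
next
  case False
  then have "fsw d i j x = (\<lambda>t. - x (tw i j t))" unfolding fsw_def nrm_def by (simp only: if_False)
  then show ?thesis using nrm_neg[OF assms] by (simp add: fsw_def)
qed

lemma cs_sym:
  assumes "0 < d" "i < d" "j < d" shows "cs (ballP d q) i = cs (ballP d q) j"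
  unfolding cs_def
  apply (rule sum.reindex_bij_witness[where i="fsw d i j" and j="fsw d i j"])
  subgoal for a by (rule fsw_invol) (simp add: ballP_def)
  subgoal for a by (rule fsw_in[OF assms])
  subgoal for a by (rule fsw_invol) (simp add: ballP_def)
  subgoal for a by (rule fsw_in[OF assms])
  subgoal by (simp add: fsw_def tw_def)
  done

lemma sum_l1: "(\<Sum>x\<in>X. l1norm d x) = (\<Sum>i<d. cs X i)"
  unfolding l1norm_def cs_def by (rule sum.swap)

lemma cs_le_kappa: "finite X \<Longrightarrow> i < d \<Longrightarrow> cs X i \<le> kappa d X"
  unfolding kappa_def cs_def by (rule Max_ge) auto

lemma kappab_cs: assumes "0 < d" "i < d" shows "kappab d q = cs (ballP d q) i"
proof -
  have "{cs (ballP d q) i' | i'. i' < d} = {cs (ballP d q) i}"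
  proof (rule set_eqI)
    fix v
    show "v \<in> {cs (ballP d q) i' | i'. i' < d} \<longleftrightarrow> v \<in> {cs (ballP d q) i}"
    proof
      assume "v \<in> {cs (ballP d q) i' | i'. i' < d}"
      then obtain i' where "i' < d" "v = cs (ballP d q) i'" by blast
      then show "v \<in> {cs (ballP d q) i}" using cs_sym[OF assms(1) _ assms(2), of i' q] by simp
    next
      assume "v \<in> {cs (ballP d q) i}"
      then show "v \<in> {cs (ballP d q) i' | i'. i' < d}" using assms(2) by blast
    qed
  qed
  then show ?thesis unfolding kappab_def kappa_def cs_def[symmetric] by simp
qed

lemma kappab_sum: assumes "0 < d" shows "int d * kappab d q = (\<Sum>x\<in>ballP d q. l1norm d x)"
proof -
  have "(\<Sum>i<d. cs (ballP d q) i) = (\<Sum>i<d. kappab d q)"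
  proof (rule sum.cong)
    fix i assume "i \<in> {..<d}"
    then show "cs (ballP d q) i = kappab d q" using kappab_cs[OF assms, of i q] by simp
  qed simp
  then show ?thesis unfolding sum_l1 by simp
qed


lemma card_split: "finite A \<Longrightarrow> card A = card (A \<inter> B) + card (A - B)"
  by (metis Diff_Diff_Int card_Diff_subset_Int finite_Int inf_le1 add.commute card_Diff_subset le_add_diff_inverse card_mono)

lemma cs_split: "finite A \<Longrightarrow> cs A i = cs (A \<inter> B) i + cs (A - B) i"
  unfolding cs_def by (rule sum.Int_Diff)

lemma l1_split: "finite A \<Longrightarrow> (\<Sum>x\<in>A. l1norm d x) = (\<Sum>x\<in>A \<inter> B. l1norm d x) + (\<Sum>x\<in>A - B. l1norm d x)"
  by (rule sum.Int_Diff)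

lemma kappa_le_iff:
  assumes "0 < d" "finite X" shows "kappa d X \<le> K \<longleftrightarrow> (\<forall>i<d. cs X i \<le> K)"
proof -
  have e: "{(\<Sum>x\<in>X. \<bar>x i\<bar>) | i. i < d} = cs X ` {..<d}" unfolding cs_def by auto
  have "kappa d X = Max (cs X ` {..<d})" unfolding kappa_def e ..
  moreover have "cs X ` {..<d} \<noteq> {}" using assms(1) by auto
  ultimately show ?thesis by (simp add: Max_le_iff) blast
qed

lemma nonprim:
  fixes m :: int
  assumes d: "0 < d" and y: "y \<in> Pcirc d" and l: "l1norm d y = int p" and dm: "int d * m = int p"
    and m1: "m \<noteq> 1" and c: "(\<forall>i<d. \<bar>y i\<bar> \<le> m) \<or> (\<forall>i<d. m \<le> \<bar>y i\<bar>)"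
  shows False
proof -
  have sm: "(\<Sum>i<d. m) = int p" using dm by simp
  have all: "\<forall>i<d. \<bar>y i\<bar> = m"
  proof (cases "\<forall>i<d. \<bar>y i\<bar> \<le> m")
    case True
    have "(\<Sum>i<d. m - \<bar>y i\<bar>) = 0" using sm l unfolding l1norm_def by (simp add: sum_subtractf)
    then have "\<forall>i\<in>{..<d}. m - \<bar>y i\<bar> = 0" using True by (subst sum_nonneg_eq_0_iff[symmetric]) auto
    then show ?thesis by auto
  next
    case False
    then have F: "\<forall>i<d. m \<le> \<bar>y i\<bar>" using c by blast
    have "(\<Sum>i<d. \<bar>y i\<bar> - m) = 0" using sm l unfolding l1norm_def by (simp add: sum_subtractf)
    then have "\<forall>i\<in>{..<d}. \<bar>y i\<bar> - m = 0" using F by (subst sum_nonneg_eq_0_iff[symmetric]) auto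
    then show ?thesis by auto
  qed
  have m0: "0 \<le> m" using all d by force
  have "m dvd Gcd (y ` {..<d})"
  proof (rule Gcd_greatest)
    fix b assume "b \<in> y ` {..<d}"
    then obtain i where "i < d" "b = y i" by auto
    then have "\<bar>b\<bar> = m" using all by simp
    then show "m dvd b" by (metis dvd_abs_iff dvd_refl)
  qed
  then have "m dvd 1" using y by (simp add: Pcirc_def primitive_def)
  then show False using m0 m1 by (simp add: zdvd1_eq)
qed



lemma ballP_sub: "ballP d q \<subseteq> Pcirc d" by (auto simp: ballP_def)

lemma case_i_core:
  fixes m :: int
  assumes d: "0 < d" and p: "0 < p" and fX: "finite X" and XP: "X \<subseteq> Pcirc d"
    and cX: "\<forall>i<d. cs X i \<le> int k" and k: "int k = kappab d (p - 1) + m"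
    and dm: "int d * m = int p" and m1: "m \<noteq> 1" and cardX: "card X = Nb d (p - 1) + 1"
  shows False
proof -
  define B where "B = ballP d (p - 1)"
  have fB: "finite B" unfolding B_def by (rule finite_ballP)
  have SB: "(\<Sum>x\<in>B. l1norm d x) = int d * kappab d (p - 1)" unfolding B_def using kappab_sum[OF d] by simp
  have SX: "(\<Sum>x\<in>X. l1norm d x) \<le> int d * int k"
  proof -
    have "(\<Sum>x\<in>X. l1norm d x) = (\<Sum>i<d. cs X i)" by (rule sum_l1)
    also have "\<dots> \<le> (\<Sum>i<d. int k)" using cX by (intro sum_mono) auto
    finally show ?thesis by simp
  qed
  have c1: "card X = card (X \<inter> B) + card (X - B)" using fX by (rule card_split)
  have c2: "card B = card (B \<inter> X) + card (B - X)" using fB by (rule card_split)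
  have NB: "Nb d (p - 1) = card B" unfolding B_def Nb_def ..
  have cc: "card (X - B) = card (B - X) + 1" using c1 c2 cardX NB by (simp add: Int_commute)
  have bBX: "(\<Sum>x\<in>B - X. l1norm d x) \<le> of_nat (card (B - X)) * (int p - 1)"
  proof (rule sum_bounded_above)
    fix x assume "x \<in> B - X" then show "l1norm d x \<le> int p - 1" using p unfolding B_def ballP_def by auto
  qed
  have lXB: "\<And>x. x \<in> X - B \<Longrightarrow> int p \<le> l1norm d x" using XP p unfolding B_def ballP_def by force
  have bXB: "of_nat (card (X - B)) * int p \<le> (\<Sum>x\<in>X - B. l1norm d x)"
    by (rule sum_bounded_below) (rule lXB)
  have e1: "(\<Sum>x\<in>X. l1norm d x) = (\<Sum>x\<in>X \<inter> B. l1norm d x) + (\<Sum>x\<in>X - B. l1norm d x)"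
    using fX by (rule l1_split)
  have e2: "(\<Sum>x\<in>B. l1norm d x) = (\<Sum>x\<in>B \<inter> X. l1norm d x) + (\<Sum>x\<in>B - X. l1norm d x)"
    using fB by (rule l1_split)
  define a where "a = card (B - X)"
  have alg: "int (a + 1) * int p - int a * (int p - 1) = int p + int a" by (simp add: algebra_simps)
  have "int a \<le> 0"
    using SX SB e1 e2 bBX bXB cc alg k dm unfolding a_def[symmetric]
    by (simp add: Int_commute algebra_simps)
  then have a0: "a = 0" by simp
  then have BX: "B \<subseteq> X" using fB unfolding a_def by auto
  have "card (X - B) = 1" using cc a0 a_def by simp
  then obtain y where y: "X - B = {y}" by (rule card_1_singletonE)
  have yX: "y \<in> X" "y \<notin> B" using y by auto
  have ly1: "int p \<le> l1norm d y" using lXB y by auto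
  have XiB: "X \<inter> B = B" using BX by auto
  have "(\<Sum>x\<in>X. l1norm d x) = (\<Sum>x\<in>B. l1norm d x) + l1norm d y"
    using e1 y XiB by simp
  then have ly2: "l1norm d y \<le> int p" using SX SB k dm by (simp add: algebra_simps)
  have ly: "l1norm d y = int p" using ly1 ly2 by simp
  have "\<forall>i<d. \<bar>y i\<bar> \<le> m"
  proof (intro allI impI)
    fix i assume i: "i < d"
    have "cs X i = cs (X \<inter> B) i + cs (X - B) i" using fX by (rule cs_split)
    also have "\<dots> = cs B i + \<bar>y i\<bar>" using y XiB by (simp add: cs_def)
    also have "cs B i = kappab d (p - 1)" unfolding B_def using kappab_cs[OF d i] by simp
    finally show "\<bar>y i\<bar> \<le> m" using cX i k by auto
  qed
  then show False using nonprim[OF d _ ly dm m1] yX XP by blast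
qed

lemma case_ii_core:
  fixes m :: int
  assumes d: "0 < d" and p: "0 < p" and fX: "finite X" and XP: "X \<subseteq> Pcirc d"
    and cX: "\<forall>i<d. cs X i \<le> int k" and k: "int k = kappab d p - m"
    and dm: "int d * m = int p" and m1: "m \<noteq> 1" and cardX: "card X + 1 = Nb d p"
  shows False
proof -
  define B where "B = ballP d p"
  have fB: "finite B" unfolding B_def by (rule finite_ballP)
  have SB: "(\<Sum>x\<in>B. l1norm d x) = int d * kappab d p" unfolding B_def using kappab_sum[OF d] by simp
  have SX: "(\<Sum>x\<in>X. l1norm d x) \<le> int d * int k"
  proof -
    have "(\<Sum>x\<in>X. l1norm d x) = (\<Sum>i<d. cs X i)" by (rule sum_l1)
    also have "\<dots> \<le> (\<Sum>i<d. int k)" using cX by (intro sum_mono) auto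
    finally show ?thesis by simp
  qed
  have c1: "card X = card (X \<inter> B) + card (X - B)" using fX by (rule card_split)
  have c2: "card B = card (B \<inter> X) + card (B - X)" using fB by (rule card_split)
  have NB: "Nb d p = card B" unfolding B_def Nb_def ..
  have cc: "card (B - X) = card (X - B) + 1" using c1 c2 cardX NB by (simp add: Int_commute)
  have bBX: "(\<Sum>x\<in>B - X. l1norm d x) \<le> of_nat (card (B - X)) * int p"
  proof (rule sum_bounded_above)
    fix x assume "x \<in> B - X" then show "l1norm d x \<le> int p" unfolding B_def ballP_def by auto
  qed
  have lXB: "\<And>x. x \<in> X - B \<Longrightarrow> int p + 1 \<le> l1norm d x" using XP unfolding B_def ballP_def by force
  have bXB: "of_nat (card (X - B)) * (int p + 1) \<le> (\<Sum>x\<in>X - B. l1norm d x)"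
    by (rule sum_bounded_below) (rule lXB)
  have e1: "(\<Sum>x\<in>X. l1norm d x) = (\<Sum>x\<in>X \<inter> B. l1norm d x) + (\<Sum>x\<in>X - B. l1norm d x)"
    using fX by (rule l1_split)
  have e2: "(\<Sum>x\<in>B. l1norm d x) = (\<Sum>x\<in>B \<inter> X. l1norm d x) + (\<Sum>x\<in>B - X. l1norm d x)"
    using fB by (rule l1_split)
  define a where "a = card (X - B)"
  have "int a \<le> 0"
    using SX SB e1 e2 bBX bXB cc k dm unfolding a_def[symmetric]
    by (simp add: Int_commute algebra_simps)
  then have a0: "a = 0" by simp
  then have XB: "X \<subseteq> B" using fX unfolding a_def by auto
  have "card (B - X) = 1" using cc a0 a_def by simp
  then obtain y where y: "B - X = {y}" by (rule card_1_singletonE)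
  have yB: "y \<in> B" "y \<notin> X" using y by auto
  have ly1: "l1norm d y \<le> int p" using yB unfolding B_def ballP_def by auto
  have BiX: "B \<inter> X = X" using XB by auto
  have "(\<Sum>x\<in>B. l1norm d x) = (\<Sum>x\<in>X. l1norm d x) + l1norm d y"
    using e2 y BiX by simp
  then have ly2: "int p \<le> l1norm d y" using SX SB k dm by (simp add: algebra_simps)
  have ly: "l1norm d y = int p" using ly1 ly2 by simp
  have "\<forall>i<d. m \<le> \<bar>y i\<bar>"
  proof (intro allI impI)
    fix i assume i: "i < d"
    have "cs B i = cs (B \<inter> X) i + cs (B - X) i" using fB by (rule cs_split)
    also have "\<dots> = cs X i + \<bar>y i\<bar>" using y BiX by (simp add: cs_def)
    finally have "cs B i = cs X i + \<bar>y i\<bar>" .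
    moreover have "cs B i = kappab d p" unfolding B_def using kappab_cs[OF d i] by simp
    ultimately show "m \<le> \<bar>y i\<bar>" using cX i k by auto
  qed
  then show False using nonprim[OF d _ ly dm m1] yB B_def ballP_sub by blast
qed



lemma delta_lt:
  assumes d: "0 < d"
    and no: "\<And>X. finite X \<Longrightarrow> X \<subseteq> Pcirc d \<Longrightarrow> (\<forall>i<d. cs X i \<le> int k) \<Longrightarrow> card X \<noteq> c"
  shows "delta_z d k < c"
proof -
  define S where "S = {card X | X. finite X \<and> X \<subseteq> Pcirc d \<and> kappa d X \<le> int k}"
  have lt: "n < c" if "n \<in> S" for n
  proof (rule ccontr)
    assume "\<not> n < c"
    from that obtain X where X: "n = card X" "finite X" "X \<subseteq> Pcirc d" "kappa d X \<le> int k"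
      unfolding S_def by blast
    have cX: "\<forall>i<d. cs X i \<le> int k" using X(4) kappa_le_iff[OF d X(2)] by blast
    have "c \<le> card X" using \<open>\<not> n < c\<close> X(1) by simp
    then obtain Y where Y: "Y \<subseteq> X" "card Y = c" "finite Y" by (rule obtain_subset_with_card_n)
    have "\<forall>i<d. cs Y i \<le> int k"
    proof (intro allI impI)
      fix i assume i: "i < d"
      have "cs Y i \<le> cs X i" unfolding cs_def by (rule sum_mono2[OF X(2) Y(1)]) auto
      then show "cs Y i \<le> int k" using cX i by auto
    qed
    then show False using no[OF Y(3)] Y X(3) by blast
  qed
  have "S \<subseteq> {..<c}" using lt by auto
  then have fS: "finite S" using finite_subset by blast
  have "kappa d {} \<le> int k" using kappa_le_iff[OF d, of "{}"] by (simp add: cs_def)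
  then have "0 \<in> S" unfolding S_def by force
  then have "Max S \<in> S" using fS by (intro Max_in) auto
  then show ?thesis using lt unfolding delta_z_def S_def[symmetric] by blast
qed

lemma shell:
  assumes p: "0 < p"
  shows "(\<Sum>x\<in>ballP d p. l1norm d x) = (\<Sum>x\<in>ballP d (p - 1). l1norm d x) + int p * int (card (ballP d p - ballP d (p - 1)))"
    and "card (ballP d p) = card (ballP d (p - 1)) + card (ballP d p - ballP d (p - 1))"
proof -
  have sub: "ballP d (p - 1) \<subseteq> ballP d p" unfolding ballP_def by auto
  have f: "finite (ballP d p)" by (rule finite_ballP)
  have "(\<Sum>x\<in>ballP d p - ballP d (p - 1). l1norm d x) = (\<Sum>x\<in>ballP d p - ballP d (p - 1). int p)"
  proof (rule sum.cong)
    fix x assume "x \<in> ballP d p - ballP d (p - 1)"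
    then show "l1norm d x = int p" using p unfolding ballP_def by auto
  qed simp
  then show "(\<Sum>x\<in>ballP d p. l1norm d x) = (\<Sum>x\<in>ballP d (p - 1). l1norm d x) + int p * int (card (ballP d p - ballP d (p - 1)))"
    using sum.subset_diff[OF sub f, of "l1norm d"] by simp
  show "card (ballP d p) = card (ballP d (p - 1)) + card (ballP d p - ballP d (p - 1))"
    using card_Diff_subset[OF finite_subset[OF sub f] sub] card_mono[OF f sub] by simp
qed



theorem lemma3p2:
  fixes d k p :: nat
  assumes "0 < d" and "0 < k"
    and "0 < p" and "int k < kappab d p"
    and "\<forall>q. 0 < q \<and> q < p \<longrightarrow> kappab d q \<le> int k"
    and "d dvd p" and "d \<noteq> p"
    and "int k - kappab d (p - 1) = int (p div d) \<or> kappab d p - int k = int (p div d)"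
  shows "int (delta_z d k) \<noteq> \<lfloor>lambda_dk d k p\<rfloor>"
proof -
  note d = assms(1) and p = assms(3)
  define m where "m = int (p div d)"
  have dm: "int d * m = int p" unfolding m_def using assms(6)
    by (metis dvd_mult_div_cancel of_nat_mult)
  have m1: "m \<noteq> 1"
  proof
    assume "m = 1"
    then have "int p = int d" using dm by simp
    then show False using assms(7) by simp
  qed
  define N where "N = Nb d (p - 1)"
  show ?thesis
  proof (cases "int k - kappab d (p - 1) = m")
    case True
    have lam: "lambda_dk d k p = real N + 1"
    proof -
      have "real k - real_of_int (kappab d (p - 1)) = real_of_int m"
        using True by (metis of_int_diff of_int_of_nat_eq)
      moreover have "real d * real_of_int m = real p" using dm by (metis of_int_mult of_int_of_nat_eq)
      ultimately show ?thesis unfolding lambda_dk_def N_def using p by simp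
    qed
    have "delta_z d k < N + 1"
    proof (rule delta_lt[OF d])
      fix X assume X: "finite X" "X \<subseteq> Pcirc d" "\<forall>i<d. cs X i \<le> int k"
      show "card X \<noteq> N + 1"
      proof
        assume "card X = N + 1"
        then show False using case_i_core[OF d p X(1) X(2) X(3) _ dm m1] True unfolding N_def by simp
      qed
    qed
    moreover have "\<lfloor>lambda_dk d k p\<rfloor> = int N + 1" unfolding lam by simp
    ultimately show ?thesis by simp
  next
    case False
    then have k2: "int k = kappab d p - m" using assms(8) unfolding m_def by auto
    define D where "D = card (ballP d p - ballP d (p - 1))"
    have S1: "int d * kappab d p = int d * kappab d (p - 1) + int p * int D"
      using shell(1)[OF p, of d] kappab_sum[OF d, of p] kappab_sum[OF d, of "p - 1"] unfolding D_def by simp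
    have C1: "Nb d p = N + D" using shell(2)[OF p, of d] unfolding N_def D_def Nb_def by simp
    have "int d * (int k - kappab d (p - 1)) = int p * (int D - 1)"
    proof -
      have "int d * int k = int d * kappab d p - int d * m" using k2 by (simp add: right_diff_distrib)
      then show ?thesis using S1 dm by (simp add: algebra_simps)
    qed
    then have "real d * (real k - real_of_int (kappab d (p - 1))) = real p * (real D - 1)"
      by (metis (no_types, opaque_lifting) of_int_diff of_int_mult of_int_of_nat_eq of_int_1)
    then have lam: "lambda_dk d k p = real N + real D - 1" unfolding lambda_dk_def N_def using p by simp
    have Bne: "ballP d p \<noteq> {}"
    proof
      assume "ballP d p = {}"
      then have "kappab d p = 0" using kappab_cs[OF d d, of p] by (simp add: cs_def)
      then show False using assms(2,4) by simp
    qed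
    then have "0 < Nb d p" unfolding Nb_def using finite_ballP by (simp add: card_gt_0_iff)
    then have ND: "1 \<le> N + D" using C1 by linarith
    have "delta_z d k < N + D - 1"
    proof (rule delta_lt[OF d])
      fix X assume X: "finite X" "X \<subseteq> Pcirc d" "\<forall>i<d. cs X i \<le> int k"
      show "card X \<noteq> N + D - 1"
      proof
        assume "card X = N + D - 1"
        then have "card X + 1 = Nb d p" using C1 ND by simp
        then show False using case_ii_core[OF d p X(1) X(2) X(3) k2 dm m1] by simp
      qed
    qed
    moreover have "\<lfloor>lambda_dk d k p\<rfloor> = int (N + D - 1)" unfolding lam using ND
      by (simp add: of_nat_diff)
    ultimately show ?thesis by simp
  qed
qed


end
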